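(* Let $t,n,k\ge1$ and $d\ge 0$ be integers with $(d+1)\mid t$. Every $d$-runlength constrained $k$-disjunct binary $t\times n$ matrix satisfies $t\ge\min(n,\,1+k(d+1))$.
   Context: A binary $t\times n$ matrix $M$ is $d$-runlength constrained if in every column, any two $1$'s are separated by a run of at least $d$ zeros, i.e. $M_{ij}=M_{i'j}=1$ with $i<i'$ implies $i'-i\ge d+1$. A binary matrix $M$ is $k$-disjunct if for every column $j$ and every set $S$ of at most $k$ columns with $j\notin S$, $\mathsf{supp}(M_{\cdot j})\not\subseteq\bigcup_{j'\in S}\mathsf{supp}(M_{\cdot j'})$, where $\mathsf{supp}$ denotes the support. *)

theory Defs
  imports Main
begin

text \<open>A binary t x n matrix is represented as M :: nat => nat => bool, where M i j
  (row i < t, column j < n) is true iff the entry is 1. Entries outside the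
  range are ignored.\<close>

definition col_supp :: "nat \<Rightarrow> (nat \<Rightarrow> nat \<Rightarrow> bool) \<Rightarrow> nat \<Rightarrow> nat set" where
  "col_supp t M j = {i. i < t \<and> M i j}"

definition runlength_constrained :: "nat \<Rightarrow> nat \<Rightarrow> (nat \<Rightarrow> nat \<Rightarrow> bool) \<Rightarrow> nat \<Rightarrow> bool" where
  "runlength_constrained t n M d \<longleftrightarrow>
     (\<forall>j<n. \<forall>i<t. \<forall>i'<t. M i j \<and> M i' j \<and> i < i' \<longrightarrow> i' - i \<ge> d + 1)"

definition disjunct :: "nat \<Rightarrow> nat \<Rightarrow> (nat \<Rightarrow> nat \<Rightarrow> bool) \<Rightarrow> nat \<Rightarrow> bool" where
  "disjunct t n M k \<longleftrightarrow>
     (\<forall>j<n. \<forall>S. S \<subseteq> {0..<n} \<and> card S \<le> k \<and> j \<notin> S \<longrightarrow>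
        \<not> (col_supp t M j \<subseteq> (\<Union>j'\<in>S. col_supp t M j')))"

end

theory Submission
  imports Defs
begin

lemma supp_card:
  assumes "runlength_constrained t n M d" "j < n" "(d + 1) dvd t"
  shows "card (col_supp t M j) \<le> t div (d + 1)"
proof -
  have inj: "inj_on (\<lambda>i. i div (d+1)) (col_supp t M j)"
  proof (rule inj_onI)
    fix x y assume x: "x \<in> col_supp t M j" and y: "y \<in> col_supp t M j"
      and e: "x div (d+1) = y div (d+1)"
    have dx: "x = x div (d+1) * (d+1) + x mod (d+1)" by (rule div_mult_mod_eq[symmetric])
    have dy: "y = y div (d+1) * (d+1) + y mod (d+1)" by (rule div_mult_mod_eq[symmetric])
    have mx: "x mod (d+1) < d+1" "y mod (d+1) < d+1" by auto
    show "x = y"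
    proof (rule ccontr)
      assume "x \<noteq> y"
      then have "x < y \<or> y < x" by auto
      moreover have "x < y \<Longrightarrow> y - x \<ge> d+1" using x y assms(1,2)
        unfolding runlength_constrained_def col_supp_def by auto
      moreover have "y < x \<Longrightarrow> x - y \<ge> d+1" using x y assms(1,2)
        unfolding runlength_constrained_def col_supp_def by auto
      moreover have "y = x div (d+1) * (d+1) + y mod (d+1)" by (metis dy e)
      ultimately show False using dx mx
        by linarith
    qed
  qed
  have sub: "(\<lambda>i. i div (d+1)) ` col_supp t M j \<subseteq> {0..<t div (d+1)}"
  proof
    fix z assume "z \<in> (\<lambda>i. i div (d+1)) ` col_supp t M j"
    then obtain i where i: "i < t" "z = i div (d+1)" unfolding col_supp_def by auto
    obtain q where q: "t = (d+1) * q" using assms(3) by auto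
    have "i div (d+1) < q" using i q by (simp add: less_mult_imp_div_less mult.commute)
    moreover have "t div (d+1) = q" unfolding q by (rule nonzero_mult_div_cancel_left) simp
    ultimately show "z \<in> {0..<t div (d+1)}" using i(2) by (simp only: atLeastLessThan_iff) simp
  qed
  have "card (col_supp t M j) = card ((\<lambda>i. i div (d+1)) ` col_supp t M j)"
    using inj by (simp add: card_image)
  also have "\<dots> \<le> t div (d+1)" using card_mono[OF _ sub] by simp
  finally show ?thesis .
qed

theorem lemma1:
  fixes t n k d :: nat and M :: "nat \<Rightarrow> nat \<Rightarrow> bool"
  assumes "t \<ge> 1" "n \<ge> 1" "k \<ge> 1"
    and "(d + 1) dvd t"
    and "runlength_constrained t n M d"
    and "disjunct t n M k"
  shows "t \<ge> min n (1 + k * (d + 1))"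
proof (rule ccontr)
  assume "\<not> ?thesis"
  then have tn: "t < n" and tk: "t \<le> k * (d+1)" by auto
  have kk: "k * (d+1) div (d+1) = k" by (rule nonzero_mult_div_cancel_right) simp
  have qk: "t div (d+1) \<le> k" using div_le_mono[OF tk, of "d+1"] unfolding kk .
  have priv: "\<exists>i. i < t \<and> M i j \<and> (\<forall>j'<n. j' \<noteq> j \<longrightarrow> \<not> M i j')" if j: "j < n" for j
  proof (rule ccontr)
    assume "\<not> ?thesis"
    then have "\<forall>i\<in>col_supp t M j. \<exists>j'. j' < n \<and> j' \<noteq> j \<and> M i j'"
      unfolding col_supp_def by auto
    then obtain f where f: "\<And>i. i \<in> col_supp t M j \<Longrightarrow> f i < n \<and> f i \<noteq> j \<and> M i (f i)"
      by metis
    define S where "S = f ` col_supp t M j"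
    have fin: "finite (col_supp t M j)" unfolding col_supp_def by auto
    have "card S \<le> card (col_supp t M j)" unfolding S_def using card_image_le fin by blast
    also have "\<dots> \<le> k" using supp_card[OF assms(5) j assms(4)] qk by linarith
    finally have cS: "card S \<le> k" .
    have "S \<subseteq> {0..<n}" "j \<notin> S" using f unfolding S_def by auto
    moreover have "col_supp t M j \<subseteq> (\<Union>j'\<in>S. col_supp t M j')"
    proof
      fix i assume i: "i \<in> col_supp t M j"
      then have "i \<in> col_supp t M (f i)" using f[OF i] unfolding col_supp_def by auto
      then show "i \<in> (\<Union>j'\<in>S. col_supp t M j')" using i unfolding S_def by auto
    qed
    ultimately show False using assms(6) j cS unfolding disjunct_def by blast
  qed
  then obtain g where g: "\<And>j. j < n \<Longrightarrow> g j < t \<and> M (g j) j \<and> (\<forall>j'<n. j' \<noteq> j \<longrightarrow> \<not> M (g j) j')"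
    by metis
  have "inj_on g {0..<n}"
    by (rule inj_onI) (metis atLeastLessThan_iff g)
  moreover have "g ` {0..<n} \<subseteq> {0..<t}" using g by auto
  ultimately have "card {0..<n} \<le> card {0..<t}" by (metis card_inj_on_le finite_atLeastLessThan)
  then show False using tn by simp
qed

end
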